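(* Let $(V,w,\mu)$ be a simple weighted graph with minimal Markov chain $(X_t)_{t\ge0}$. Let $\mathcal U$ be a bounded real function on $V$, and let $\varphi$ be a bounded nonnegative function on $V$ with \[(\Delta+\mathcal U)\varphi\ge0\quad\text{on }V.\] Then $\tilde P^{\mathcal U}_t\varphi\le\varphi$ for all $t\ge0$.
   Context: A simple weighted graph $(V,w,\mu)$ consists of a countably infinite set $V$, a symmetric function $w:V\times V\to[0,\infty)$ and a function $\mu:V\to(0,\infty)$. The graph with edges $\{x\sim y:w(x,y)>0\}$ is assumed to be locally finite, connected, and without loops or multiple edges. The minimal Markov chain has $Q$-matrix $q_{xy}=w(x,y)/\mu(x)$ for $x\neq y$ and $q_{xx}=-\frac1{\mu(x)}\sum_y w(x,y)$. It has lifetime $\zeta$, cemetery $\infty$, and laws $\mathbb P_x$; functions are extended by $f(\infty)=0$. The formal Laplacian is $\Delta u(x)=\frac1{\mu(x)}\sum_y w(x,y)(u(x)-u(y))$. For bounded $\mathcal U$ and bounded nonnegative $f$, \[\tilde P^{\mathcal U}_t f(x)=\mathbb E_x\Big[f(X_t)\exp\Big(-\int_0^t\mathcal U(X_s)\,ds\Big)\Big].\] *)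

theory Defs
  imports "HOL-Probability.Probability" "HOL-Library.Countable"
begin

definition simple_weighted_graph :: "('v::countable \<Rightarrow> 'v \<Rightarrow> real) \<Rightarrow> ('v \<Rightarrow> real) \<Rightarrow> bool" where
  "simple_weighted_graph w \<mu> \<longleftrightarrow>
     infinite (UNIV :: 'v set) \<and>
     (\<forall>x y. w x y = w y x) \<and> (\<forall>x y. 0 \<le> w x y) \<and> (\<forall>x. w x x = 0) \<and>
     (\<forall>x. 0 < \<mu> x) \<and> (\<forall>x. finite {y. 0 < w x y}) \<and>
     (\<forall>x y. (\<lambda>a b. 0 < w a b)\<^sup>*\<^sup>* x y)"

definition nbrs :: "('v \<Rightarrow> 'v \<Rightarrow> real) \<Rightarrow> 'v \<Rightarrow> 'v set" where
  "nbrs w x = {y. 0 < w x y}"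

definition wdeg :: "('v \<Rightarrow> 'v \<Rightarrow> real) \<Rightarrow> 'v \<Rightarrow> real" where
  "wdeg w x = (\<Sum>y\<in>nbrs w x. w x y)"

text \<open>Formal Laplacian (the sum over all y reduces to the finite neighbour set).\<close>
definition graph_laplacian :: "('v \<Rightarrow> 'v \<Rightarrow> real) \<Rightarrow> ('v \<Rightarrow> real) \<Rightarrow> ('v \<Rightarrow> real) \<Rightarrow> 'v \<Rightarrow> real" where
  "graph_laplacian w \<mu> u x = (1 / \<mu> x) * (\<Sum>y\<in>nbrs w x. w x y * (u x - u y))"

text \<open>Jump chain step: from x, using a uniform variable u in [0,1], choose neighbour y
  with probability w(x,y)/deg(x) (inverse-CDF along the enumeration to_nat).\<close>
definition cum_prob :: "('v::countable \<Rightarrow> 'v \<Rightarrow> real) \<Rightarrow> 'v \<Rightarrow> 'v \<Rightarrow> real" where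
  "cum_prob w x y = (\<Sum>z\<in>{z\<in>nbrs w x. to_nat z \<le> to_nat y}. w x z) / wdeg w x"

definition jump_next :: "('v::countable \<Rightarrow> 'v \<Rightarrow> real) \<Rightarrow> 'v \<Rightarrow> real \<Rightarrow> 'v" where
  "jump_next w x u =
     (if \<exists>y\<in>nbrs w x. u < cum_prob w x y
      then from_nat (LEAST k. \<exists>y\<in>nbrs w x. to_nat y = k \<and> u < cum_prob w x y)
      else x)"

text \<open>Sample points: omega n = (U_n, E_n), U_n uniform on [0,1], E_n standard exponential,
  all independent.\<close>
definition chain_space :: "(nat \<Rightarrow> real \<times> real) measure" where
  "chain_space = PiM UNIV (\<lambda>_. pair_measure (uniform_measure lborel {0..1::real})
                                           (density lborel (exponential_density 1)))"

fun jump_chain :: "('v::countable \<Rightarrow> 'v \<Rightarrow> real) \<Rightarrow> 'v \<Rightarrow> (nat \<Rightarrow> real \<times> real) \<Rightarrow> nat \<Rightarrow> 'v" where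
  "jump_chain w x \<omega> 0 = x"
| "jump_chain w x \<omega> (Suc n) = jump_next w (jump_chain w x \<omega> n) (fst (\<omega> n))"

text \<open>Holding time in state Y_n: Exp(q) with rate q = deg/mu, realised as E_n / q.\<close>
definition holding_time :: "('v::countable \<Rightarrow> 'v \<Rightarrow> real) \<Rightarrow> ('v \<Rightarrow> real) \<Rightarrow> 'v \<Rightarrow> (nat \<Rightarrow> real \<times> real) \<Rightarrow> nat \<Rightarrow> real" where
  "holding_time w \<mu> x \<omega> n =
     snd (\<omega> n) * \<mu> (jump_chain w x \<omega> n) / wdeg w (jump_chain w x \<omega> n)"

definition jump_time :: "('v::countable \<Rightarrow> 'v \<Rightarrow> real) \<Rightarrow> ('v \<Rightarrow> real) \<Rightarrow> 'v \<Rightarrow> (nat \<Rightarrow> real \<times> real) \<Rightarrow> nat \<Rightarrow> real" where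
  "jump_time w \<mu> x \<omega> n = (\<Sum>i<n. holding_time w \<mu> x \<omega> i)"

text \<open>Minimal chain started at x: state Some (Y_n) on [J_n, J_(n+1)); after explosion
  (no such n) it is in the cemetery, represented by None.\<close>
definition chain_state :: "('v::countable \<Rightarrow> 'v \<Rightarrow> real) \<Rightarrow> ('v \<Rightarrow> real) \<Rightarrow> 'v \<Rightarrow> (nat \<Rightarrow> real \<times> real) \<Rightarrow> real \<Rightarrow> 'v option" where
  "chain_state w \<mu> x \<omega> t =
     (if \<exists>n. jump_time w \<mu> x \<omega> n \<le> t \<and> t < jump_time w \<mu> x \<omega> (Suc n)
      then Some (jump_chain w x \<omega> (LEAST n. jump_time w \<mu> x \<omega> n \<le> t \<and> t < jump_time w \<mu> x \<omega> (Suc n)))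
      else None)"

definition ext_cem :: "('v \<Rightarrow> real) \<Rightarrow> 'v option \<Rightarrow> real" where
  "ext_cem f = case_option 0 f"

definition fk_semigroup :: "('v::countable \<Rightarrow> 'v \<Rightarrow> real) \<Rightarrow> ('v \<Rightarrow> real) \<Rightarrow> ('v \<Rightarrow> real) \<Rightarrow> real \<Rightarrow> ('v \<Rightarrow> real) \<Rightarrow> 'v \<Rightarrow> ennreal" where
  "fk_semigroup w \<mu> U t f x =
     (\<integral>\<^sup>+ \<omega>. ennreal (ext_cem f (chain_state w \<mu> x \<omega> t) *
              exp (- (LBINT s:{0..t}. ext_cem U (chain_state w \<mu> x \<omega> s)))) \<partial>chain_space)"

end

theory Submission
  imports Defs
begin

lemma swg_facts:
  assumes "simple_weighted_graph w \<mu>"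
  shows "finite (nbrs w x)" "nbrs w x \<noteq> {}" "0 < wdeg w x" "x \<notin> nbrs w x" "0 < \<mu> x"
proof -
  note A = assms[unfolded simple_weighted_graph_def]
  show f: "finite (nbrs w x)" unfolding nbrs_def using A by blast
  show "x \<notin> nbrs w x" using A by (simp add: nbrs_def)
  show "0 < \<mu> x" using A by simp
  have "infinite (UNIV - {x})" using A by (intro Diff_infinite_finite) auto
  then obtain y where "y \<in> UNIV - {x}" using infinite_imp_nonempty by blast
  then have "y \<noteq> x" by simp
  moreover have "(\<lambda>a b. 0 < w a b)\<^sup>*\<^sup>* x y" using A by blast
  ultimately obtain z where "0 < w x z"
    by (metis converse_rtranclpE)
  then show ne: "nbrs w x \<noteq> {}" by (auto simp: nbrs_def)
  show "0 < wdeg w x" unfolding wdeg_def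
    using f ne by (intro sum_pos) (auto simp: nbrs_def)
qed

lemma meas_jn[measurable]: "jump_next w x \<in> borel \<rightarrow>\<^sub>M count_space UNIV"
  unfolding jump_next_def by measurable

definition cl_prob :: "('v::countable \<Rightarrow> 'v \<Rightarrow> real) \<Rightarrow> 'v \<Rightarrow> 'v \<Rightarrow> real" where
  "cl_prob w x y = (\<Sum>z\<in>{z\<in>nbrs w x. to_nat z < to_nat y}. w x z) / wdeg w x"

lemma cum_split:
  assumes "simple_weighted_graph w \<mu>" "y \<in> nbrs w x"
  shows "cum_prob w x y = cl_prob w x y + w x y / wdeg w x"
proof -
  have f: "finite (nbrs w x)" using swg_facts[OF assms(1)] by auto
  have "{z\<in>nbrs w x. to_nat z \<le> to_nat y} = insert y {z\<in>nbrs w x. to_nat z < to_nat y}"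
    using assms(2) by (auto simp: order_le_less)
  moreover have "y \<notin> {z\<in>nbrs w x. to_nat z < to_nat y}" by auto
  ultimately show ?thesis using f unfolding cum_prob_def cl_prob_def
    by (simp add: add_divide_distrib)
qed

lemma cum_max:
  assumes "finite B" "B \<noteq> {}" "B \<subseteq> nbrs w x"
    "\<And>z. z \<in> nbrs w x \<Longrightarrow> to_nat z \<le> to_nat m \<Longrightarrow> z \<in> B" "m \<in> B" "\<And>z. z \<in> B \<Longrightarrow> to_nat z \<le> to_nat m"
  shows "cum_prob w x m = (\<Sum>z\<in>B. w x z) / wdeg w x"
proof -
  have "{z\<in>nbrs w x. to_nat z \<le> to_nat m} = B" using assms by auto
  then show ?thesis unfolding cum_prob_def by simp
qed

lemma max_exists:
  fixes B :: "'v::countable set"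
  assumes "finite B" "B \<noteq> {}"
  obtains m where "m \<in> B" "\<And>z. z \<in> B \<Longrightarrow> to_nat z \<le> to_nat m"
proof -
  have "Max (to_nat ` B) \<in> to_nat ` B" using assms by simp
  then obtain m where "m \<in> B" "to_nat m = Max (to_nat ` B)" by auto
  then show ?thesis using that assms by auto
qed

lemma jn_cases:
  assumes G: "simple_weighted_graph w \<mu>" and u: "0 \<le> u"
  shows "(jump_next w x u \<in> nbrs w x \<and> cl_prob w x (jump_next w x u) \<le> u \<and> u < cum_prob w x (jump_next w x u))
    \<or> (jump_next w x u = x \<and> 1 \<le> u)"
proof (cases "\<exists>y\<in>nbrs w x. u < cum_prob w x y")
  case True
  define P where "P k \<longleftrightarrow> (\<exists>y\<in>nbrs w x. to_nat y = k \<and> u < cum_prob w x y)" for k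
  have "\<exists>k. P k" using True by (auto simp: P_def)
  then have "P (LEAST k. P k)" by (rule LeastI_ex)
  then obtain y where y: "y \<in> nbrs w x" "to_nat y = (LEAST k. P k)" "u < cum_prob w x y"
    by (auto simp: P_def)
  have jn: "jump_next w x u = y" using True y unfolding jump_next_def P_def[symmetric]
    by (metis from_nat_to_nat)
  have below: "\<not> u < cum_prob w x z" if "z \<in> nbrs w x" "to_nat z < to_nat y" for z
  proof
    assume "u < cum_prob w x z"
    then have "P (to_nat z)" using that by (auto simp: P_def)
    then show False using not_less_Least that y(2) by metis
  qed
  define B where "B = {z\<in>nbrs w x. to_nat z < to_nat y}"
  have fB: "finite B" using swg_facts[OF G] by (auto simp: B_def)
  have "cl_prob w x y \<le> u"
  proof (cases "B = {}")
    case True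
    then show ?thesis using u by (simp add: cl_prob_def B_def[symmetric])
  next
    case False
    obtain m where m: "m \<in> B" "\<And>z. z \<in> B \<Longrightarrow> to_nat z \<le> to_nat m" using max_exists[OF fB False] by blast
    have "cum_prob w x m = (\<Sum>z\<in>B. w x z) / wdeg w x"
      using m by (intro cum_max[OF fB False]) (auto simp: B_def)
    moreover have "\<not> u < cum_prob w x m" using m below by (auto simp: B_def)
    ultimately show ?thesis by (simp add: cl_prob_def B_def[symmetric])
  qed
  then show ?thesis using jn y by auto
next
  case False
  have jn: "jump_next w x u = x" using False unfolding jump_next_def by auto
  have f: "finite (nbrs w x)" and ne: "nbrs w x \<noteq> {}" and d: "0 < wdeg w x"
    using swg_facts[OF G] by auto
  obtain m where m: "m \<in> nbrs w x" "\<And>z. z \<in> nbrs w x \<Longrightarrow> to_nat z \<le> to_nat m"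
    using max_exists[OF f ne] by blast
  have "cum_prob w x m = (\<Sum>z\<in>nbrs w x. w x z) / wdeg w x"
    using m by (intro cum_max[OF f ne]) auto
  also have "\<dots> = 1" using d by (simp add: wdeg_def)
  finally have "1 \<le> u" using False m by force
  then show ?thesis using jn by auto
qed

lemma unif_bound:
  assumes G: "simple_weighted_graph w \<mu>" and phi: "\<And>y. 0 \<le> \<phi> y"
  shows "(\<integral>\<^sup>+u. ennreal (\<phi> (jump_next w x u)) \<partial>uniform_measure lborel {0..1::real})
     \<le> ennreal ((\<Sum>y\<in>nbrs w x. w x y * \<phi> y) / wdeg w x)"
proof -
  have f: "finite (nbrs w x)" and d: "0 < wdeg w x" using swg_facts[OF G] by auto
  have wpos: "0 \<le> w x y" for y using G by (auto simp: simple_weighted_graph_def)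
  let ?R = "\<lambda>u. (\<Sum>y\<in>nbrs w x. ennreal (\<phi> y) * indicator {cl_prob w x y..<cum_prob w x y} u)
               + ennreal (\<phi> x) * indicator {1::real} u"
  have "(\<integral>\<^sup>+u. ennreal (\<phi> (jump_next w x u)) \<partial>uniform_measure lborel {0..1::real})
      = (\<integral>\<^sup>+u. ennreal (\<phi> (jump_next w x u)) * indicator {0..1} u \<partial>lborel)"
    by (subst nn_integral_uniform_measure) (auto simp: divide_ennreal_def)
  also have "\<dots> \<le> (\<integral>\<^sup>+u. ?R u \<partial>lborel)"
  proof (rule nn_integral_mono)
    fix u :: real
    show "ennreal (\<phi> (jump_next w x u)) * indicator {0..1} u \<le> ?R u"
    proof (cases "u \<in> {0..1}")
      case False then show ?thesis by simp
    next
      case True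
      then have u0: "0 \<le> u" and u1: "u \<le> 1" by auto
      from jn_cases[OF G u0, of x] show ?thesis
      proof
        assume A: "jump_next w x u \<in> nbrs w x \<and> cl_prob w x (jump_next w x u) \<le> u \<and> u < cum_prob w x (jump_next w x u)"
        let ?y = "jump_next w x u"
        have "ennreal (\<phi> ?y) * indicator {0..1} u = ennreal (\<phi> ?y) * indicator {cl_prob w x ?y..<cum_prob w x ?y} u"
          using A True by simp
        also have "\<dots> \<le> (\<Sum>y\<in>nbrs w x. ennreal (\<phi> y) * indicator {cl_prob w x y..<cum_prob w x y} u)"
          using A f by (intro member_le_sum) auto
        also have "\<dots> \<le> ?R u" by simp
        finally show ?thesis .
      next
        assume A: "jump_next w x u = x \<and> 1 \<le> u"
        then have "u = 1" using u1 by simp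
        then show ?thesis using A by (simp add: add_increasing)
      qed
    qed
  qed
  also have "\<dots> = (\<Sum>y\<in>nbrs w x. ennreal (\<phi> y) * emeasure lborel {cl_prob w x y..<cum_prob w x y})
               + ennreal (\<phi> x) * emeasure lborel {1::real}"
    by (simp add: nn_integral_add nn_integral_sum nn_integral_cmult_indicator)
  also have "\<dots> = (\<Sum>y\<in>nbrs w x. ennreal (w x y * \<phi> y / wdeg w x))"
  proof -
    have "ennreal (\<phi> y) * emeasure lborel {cl_prob w x y..<cum_prob w x y} = ennreal (w x y * \<phi> y / wdeg w x)"
      if "y \<in> nbrs w x" for y
    proof -
      have e: "cum_prob w x y - cl_prob w x y = w x y / wdeg w x" using cum_split[OF G that] by simp
      have "0 \<le> w x y / wdeg w x" using wpos d by simp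
      then have "emeasure lborel {cl_prob w x y..<cum_prob w x y} = ennreal (w x y / wdeg w x)"
        using e by (subst emeasure_lborel_Ico) auto
      then show ?thesis using phi[of y] wpos[of y] d
        by (simp add: ennreal_mult'[symmetric] mult.commute)
    qed
    then show ?thesis by simp
  qed
  also have "\<dots> = ennreal (\<Sum>y\<in>nbrs w x. w x y * \<phi> y / wdeg w x)"
    using phi wpos d by (intro sum_ennreal) auto
  also have "\<dots> = ennreal ((\<Sum>y\<in>nbrs w x. w x y * \<phi> y) / wdeg w x)"
    by (simp add: sum_divide_distrib)
  finally show ?thesis .
qed

lemma exp_neg_tendsto: "((\<lambda>e::real. C * exp (- e)) \<longlongrightarrow> 0) at_top"
proof -
  have "((\<lambda>e::real. exp (- e)) \<longlongrightarrow> 0) at_top"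
    by (rule filterlim_compose[OF exp_at_bot filterlim_uminus_at_bot_at_top])
  then show ?thesis using tendsto_mult_right_zero by blast
qed

lemma exp_bound:
  fixes c t P ph V :: real
  assumes c: "0 < c" and t: "0 \<le> t" and P: "0 \<le> P" and ph: "0 \<le> ph" and hyp: "P \<le> (1 + V * c) * ph"
  shows "(\<integral>\<^sup>+e. (if t < e * c then ennreal (ph * exp (- (V * t)))
             else ennreal (exp (- (V * (e * c)))) * ennreal P) \<partial>density lborel (exponential_density 1))
         \<le> ennreal ph"
proof -
  define s where "s = t / c"
  define a where "a = 1 + V * c"
  have s0: "0 \<le> s" using c t by (simp add: s_def)
  have aph: "0 \<le> a * ph" using P hyp by (simp add: a_def)
  let ?g = "\<lambda>e. (if t < e * c then ennreal (ph * exp (- (V * t)))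
             else ennreal (exp (- (V * (e * c)))) * ennreal P)"
  have "(\<integral>\<^sup>+e. ?g e \<partial>density lborel (exponential_density 1))
      = (\<integral>\<^sup>+e. ennreal (exponential_density 1 e) * ?g e \<partial>lborel)"
    by (subst nn_integral_density) auto
  also have "\<dots> \<le> (\<integral>\<^sup>+e. ennreal (ph * exp (- (V * t)) * exp (- e)) * indicator {s..} e
                        + ennreal (a * ph * exp (- (a * e))) * indicator {0..s} e \<partial>lborel)"
  proof (rule nn_integral_mono)
    fix e :: real
    show "ennreal (exponential_density 1 e) * ?g e \<le> ennreal (ph * exp (- (V * t)) * exp (- e)) * indicator {s..} e
                        + ennreal (a * ph * exp (- (a * e))) * indicator {0..s} e"
    proof (cases "e < 0")
      case True then show ?thesis by (simp add: exponential_density_def)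
    next
      case False
      then have ed: "exponential_density 1 e = exp (- e)" by (simp add: exponential_density_def)
      show ?thesis
      proof (cases "t < e * c")
        case True
        then have "s \<le> e" using c by (simp add: s_def pos_divide_le_eq)
        then have "ennreal (exponential_density 1 e) * ?g e = ennreal (ph * exp (- (V * t)) * exp (- e)) * indicator {s..} e"
          using True ed ph by (simp add: ennreal_mult'[symmetric] mult.commute)
        then show ?thesis by (simp add: add_increasing2)
      next
        case False2: False
        then have "e \<le> s" using c by (simp add: s_def pos_le_divide_eq)
        have ee: "exp (- e) * exp (- (V * (e * c))) = exp (- (a * e))"
          by (simp add: a_def exp_add[symmetric] algebra_simps)
        have "ennreal (exponential_density 1 e) * ?g e = ennreal (exp (- e) * exp (- (V * (e * c))) * P)"
          using False2 ed P by (simp add: ennreal_mult'[symmetric] mult.assoc)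
        also have "\<dots> = ennreal (exp (- (a * e)) * P)" using ee by simp
        also have "\<dots> \<le> ennreal (a * ph * exp (- (a * e)))"
          using hyp by (intro ennreal_leI) (simp add: a_def mult.commute)
        also have "\<dots> = ennreal (a * ph * exp (- (a * e))) * indicator {0..s} e"
          using \<open>e \<le> s\<close> False by simp
        finally show ?thesis by (simp add: add_increasing)
      qed
    qed
  qed
  also have "\<dots> = (\<integral>\<^sup>+e. ennreal (ph * exp (- (V * t)) * exp (- e)) * indicator {s..} e \<partial>lborel)
                  + (\<integral>\<^sup>+e. ennreal (a * ph * exp (- (a * e))) * indicator {0..s} e \<partial>lborel)"
    by (rule nn_integral_add) auto
  also have "(\<integral>\<^sup>+e. ennreal (ph * exp (- (V * t)) * exp (- e)) * indicator {s..} e \<partial>lborel)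
      = ennreal (0 - (- (ph * exp (- (V * t)) * exp (- s))))"
  proof (rule nn_integral_FTC_atLeast)
    show "(\<lambda>e. ph * exp (- (V * t)) * exp (- e)) \<in> borel_measurable borel" by measurable
    show "DERIV (\<lambda>e. - (ph * exp (- (V * t)) * exp (- e))) x :> ph * exp (- (V * t)) * exp (- x)" for x
      by (auto intro!: derivative_eq_intros)
    show "0 \<le> ph * exp (- (V * t)) * exp (- x)" for x using ph by simp
    show "((\<lambda>e. - (ph * exp (- (V * t)) * exp (- e))) \<longlongrightarrow> 0) at_top"
      using exp_neg_tendsto[of "- (ph * exp (- (V * t)))"] by simp
  qed
  also have "(\<integral>\<^sup>+e. ennreal (a * ph * exp (- (a * e))) * indicator {0..s} e \<partial>lborel)
      = ennreal ((- (ph * exp (- (a * s)))) - (- (ph * exp (- (a * 0)))))"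
  proof (rule nn_integral_FTC_Icc)
    show "(\<lambda>e. a * ph * exp (- (a * e))) \<in> borel_measurable borel" by measurable
    show "DERIV (\<lambda>e. - (ph * exp (- (a * e)))) x :> a * ph * exp (- (a * x))" for x
      by (auto intro!: derivative_eq_intros)
    show "0 \<le> a * ph * exp (- (a * x))" for x using aph by simp
  qed (rule s0)
  also have "ennreal (0 - (- (ph * exp (- (V * t)) * exp (- s)))) + ennreal ((- (ph * exp (- (a * s)))) - (- (ph * exp (- (a * 0)))))
      = ennreal ph"
  proof -
    have "exp (- (V * t)) * exp (- s) = exp (- (a * s))"
      using c by (simp add: a_def s_def exp_add[symmetric] field_simps)
    moreover have "0 \<le> ph - ph * exp (- (a * s))"
    proof (cases "ph = 0")
      case False
      then have "0 \<le> a" using aph ph by (simp add: zero_le_mult_iff)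
      then have "exp (- (a * s)) \<le> 1" using s0 by simp
      then have "ph * exp (- (a * s)) \<le> ph" using ph by (simp add: mult_left_le)
      then show ?thesis by simp
    qed simp
    ultimately show ?thesis using ph by (simp add: ennreal_plus[symmetric] del: ennreal_plus)
  qed
  finally show ?thesis by simp
qed

definition M0 :: "(real \<times> real) measure" where
  "M0 = pair_measure (uniform_measure lborel {0..1::real}) (density lborel (exponential_density 1))"

lemma chain_space_M0: "chain_space = PiM UNIV (\<lambda>_. M0)"
  by (simp add: chain_space_def M0_def)

lemma sets_M0: "sets M0 = sets (borel \<Otimes>\<^sub>M borel)"
  unfolding M0_def by (intro sets_pair_measure_cong) auto

lemma space_M0: "space M0 = UNIV"
  unfolding M0_def by (simp add: space_pair_measure)

lemma space_chain: "space chain_space = UNIV"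
  by (simp add: chain_space_M0 space_PiM space_M0)

lemma meas_comp[measurable]: "(\<lambda>\<omega>. \<omega> i) \<in> chain_space \<rightarrow>\<^sub>M (borel \<Otimes>\<^sub>M borel)"
proof -
  have "(\<lambda>\<omega>. \<omega> i) \<in> chain_space \<rightarrow>\<^sub>M M0" unfolding chain_space_M0 by measurable
  then show ?thesis using sets_M0 measurable_cong_sets by blast
qed

lemma meas_shift[measurable]: "(\<lambda>\<omega> k. \<omega> (Suc k)) \<in> chain_space \<rightarrow>\<^sub>M chain_space"
  unfolding chain_space_M0
  by (rule measurable_PiM_single') (auto simp: space_PiM space_M0)

primrec Tr :: "('v::countable \<Rightarrow> 'v \<Rightarrow> real) \<Rightarrow> ('v \<Rightarrow> real) \<Rightarrow> ('v \<Rightarrow> real) \<Rightarrow> ('v \<Rightarrow> real) \<Rightarrow> nat \<Rightarrow> 'v \<Rightarrow> real \<Rightarrow> (nat \<Rightarrow> real \<times> real) \<Rightarrow> ennreal" where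
  "Tr w \<mu> U \<phi> 0 x t \<omega> = 0"
| "Tr w \<mu> U \<phi> (Suc n) x t \<omega> =
    (if t < snd (\<omega> 0) * (\<mu> x / wdeg w x) then ennreal (\<phi> x * exp (- (U x * t)))
     else ennreal (exp (- (U x * (snd (\<omega> 0) * (\<mu> x / wdeg w x))))) *
          Tr w \<mu> U \<phi> n (jump_next w x (fst (\<omega> 0))) (t - snd (\<omega> 0) * (\<mu> x / wdeg w x)) (\<lambda>k. \<omega> (Suc k)))"

lemma Tr_meas: "(\<lambda>p. Tr w \<mu> U \<phi> n x (fst p) (snd p)) \<in> borel_measurable (borel \<Otimes>\<^sub>M chain_space)"
proof (induction n arbitrary: x)
  case 0
  then show ?case by simp
next
  case (Suc n)
  have IH: "(\<lambda>p. Tr w \<mu> U \<phi> n y (fst p - snd (snd p 0) * (\<mu> x / wdeg w x)) (\<lambda>k. snd p (Suc k)))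
            \<in> borel_measurable (borel \<Otimes>\<^sub>M chain_space)" for y
  proof -
    have h: "(\<lambda>p::real \<times> (nat \<Rightarrow> real \<times> real). (fst p - snd (snd p 0) * (\<mu> x / wdeg w x), (\<lambda>k. snd p (Suc k))))
         \<in> (borel \<Otimes>\<^sub>M chain_space) \<rightarrow>\<^sub>M (borel \<Otimes>\<^sub>M chain_space)"
      by measurable
    from measurable_comp[OF h Suc.IH[of y]] show ?thesis by (simp add: comp_def)
  qed
  have g: "(\<lambda>p::real \<times> (nat \<Rightarrow> real \<times> real). jump_next w x (fst (snd p 0))) \<in> (borel \<Otimes>\<^sub>M chain_space) \<rightarrow>\<^sub>M count_space UNIV"
    by measurable
  have "(\<lambda>p. Tr w \<mu> U \<phi> n (jump_next w x (fst (snd p 0))) (fst p - snd (snd p 0) * (\<mu> x / wdeg w x)) (\<lambda>k. snd p (Suc k)))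
        \<in> borel_measurable (borel \<Otimes>\<^sub>M chain_space)"
    by (rule measurable_compose_countable[OF IH g])
  note [measurable] = this
  show ?case unfolding Tr.simps by measurable
qed

abbreviation "Unif \<equiv> uniform_measure lborel {0..1::real}"
abbreviation "Expd \<equiv> density lborel (exponential_density (1::real))"

lemma prob_Unif: "prob_space Unif"
  by (intro prob_space_uniform_measure) auto

lemma prob_Expd: "prob_space Expd"
  by (intro prob_space_exponential_density) auto

lemma prob_M0: "prob_space M0"
  unfolding M0_def by (intro prob_space_pair prob_Unif prob_Expd)

interpretation UE: pair_prob_space Unif Expd
  using prob_Unif prob_Expd by (simp add: pair_prob_space_def pair_sigma_finite_def prob_space_imp_sigma_finite)

interpretation SQ: sequence_space M0
  by (simp add: sequence_space_def product_prob_space_def product_sigma_finite_def prob_M0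
       prob_space_imp_sigma_finite product_prob_space_axioms_def)

lemma S_eq: "SQ.S = chain_space" by (simp add: chain_space_M0)

lemma split_integral:
  assumes f: "f \<in> borel_measurable chain_space"
  shows "(\<integral>\<^sup>+\<omega>. f \<omega> \<partial>chain_space) = (\<integral>\<^sup>+s. (\<integral>\<^sup>+\<omega>'. f (case_nat s \<omega>') \<partial>chain_space) \<partial>M0)"
proof -
  have m: "(\<lambda>(s, \<omega>). case_nat s \<omega>) \<in> (M0 \<Otimes>\<^sub>M SQ.S) \<rightarrow>\<^sub>M SQ.S" by measurable
  have "(\<integral>\<^sup>+\<omega>. f \<omega> \<partial>chain_space) = (\<integral>\<^sup>+\<omega>. f \<omega> \<partial>distr (M0 \<Otimes>\<^sub>M SQ.S) SQ.S (\<lambda>(s, \<omega>). case_nat s \<omega>))"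
    using SQ.PiM_iter unfolding S_eq by simp
  also have "\<dots> = (\<integral>\<^sup>+p. f (case_prod case_nat p) \<partial>(M0 \<Otimes>\<^sub>M SQ.S))"
    using f m by (subst nn_integral_distr) (auto simp: S_eq)
  also have "\<dots> = (\<integral>\<^sup>+s. (\<integral>\<^sup>+\<omega>'. f (case_nat s \<omega>') \<partial>SQ.S) \<partial>M0)"
    using f m by (subst SQ.P.nn_integral_fst[symmetric]) (auto simp: S_eq)
  finally show ?thesis by (simp add: S_eq)
qed

lemma prob_chain: "prob_space chain_space"
  using SQ.prob_space_axioms S_eq by simp

lemma Tr_meas_t[measurable]: "(\<lambda>\<omega>. Tr w \<mu> U \<phi> n x t \<omega>) \<in> borel_measurable chain_space"
proof -
  have "(\<lambda>\<omega>. (t, \<omega>)) \<in> chain_space \<rightarrow>\<^sub>M borel \<Otimes>\<^sub>M chain_space" by measurable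
  from measurable_comp[OF this Tr_meas] show ?thesis by (simp add: comp_def)
qed

lemma meas_phi_jn[measurable]: "(\<lambda>u. \<phi> (jump_next w x u) :: real) \<in> borel_measurable borel"
  by (rule measurable_compose[OF meas_jn]) simp

lemma hyp_P:
  assumes G: "simple_weighted_graph w \<mu>"
    and H: "0 \<le> graph_laplacian w \<mu> \<phi> x + U x * \<phi> x"
  shows "(\<Sum>y\<in>nbrs w x. w x y * \<phi> y) / wdeg w x \<le> (1 + U x * (\<mu> x / wdeg w x)) * \<phi> x"
proof -
  have d: "0 < wdeg w x" and m: "0 < \<mu> x" using swg_facts[OF G] by auto
  define S where "S = (\<Sum>y\<in>nbrs w x. w x y * \<phi> y)"
  have "(\<Sum>y\<in>nbrs w x. w x y * (\<phi> x - \<phi> y)) = wdeg w x * \<phi> x - S"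
    by (simp add: S_def wdeg_def algebra_simps sum_subtractf sum_distrib_right sum_distrib_left)
  then have L: "graph_laplacian w \<mu> \<phi> x = (wdeg w x * \<phi> x - S) / \<mu> x"
    by (simp add: graph_laplacian_def)
  have "0 \<le> ((wdeg w x * \<phi> x - S) / \<mu> x + U x * \<phi> x) * (\<mu> x / wdeg w x)"
    using H L d m by simp
  also have "\<dots> = \<phi> x - S / wdeg w x + U x * (\<mu> x / wdeg w x) * \<phi> x"
    using d m by (simp add: field_simps)
  finally show ?thesis by (simp add: S_def algebra_simps)
qed

lemma Tr_bound:
  assumes G: "simple_weighted_graph w \<mu>" and phi: "\<And>y. 0 \<le> \<phi> y"
    and H: "\<And>x. 0 \<le> graph_laplacian w \<mu> \<phi> x + U x * \<phi> x"
  shows "0 \<le> t \<Longrightarrow> (\<integral>\<^sup>+\<omega>. Tr w \<mu> U \<phi> n x t \<omega> \<partial>chain_space) \<le> ennreal (\<phi> x)"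
proof (induction n arbitrary: x t)
  case 0
  then show ?case by simp
next
  case (Suc n)
  define c where "c = \<mu> x / wdeg w x"
  have c: "0 < c" using swg_facts[OF G, of x] by (simp add: c_def)
  define P where "P = (\<Sum>y\<in>nbrs w x. w x y * \<phi> y) / wdeg w x"
  have P0: "0 \<le> P" unfolding P_def using phi G swg_facts[OF G, of x]
    by (intro divide_nonneg_pos sum_nonneg mult_nonneg_nonneg) (auto simp: simple_weighted_graph_def)
  have hP: "P \<le> (1 + U x * c) * \<phi> x" using hyp_P[of w \<mu> \<phi> x U, OF G H[of x]] by (simp add: P_def c_def)
  define A where "A = ennreal (\<phi> x * exp (- (U x * t)))"
  define h where "h s = (if t < snd s * c then A
      else ennreal (exp (- (U x * (snd s * c)))) * ennreal (\<phi> (jump_next w x (fst s))))" for s :: "real \<times> real"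
  have hm: "h \<in> borel_measurable M0"
  proof -
    have "h \<in> borel_measurable (borel \<Otimes>\<^sub>M borel)" unfolding h_def by measurable
    then show ?thesis using sets_M0 measurable_cong_sets by blast
  qed
  have "(\<integral>\<^sup>+\<omega>. Tr w \<mu> U \<phi> (Suc n) x t \<omega> \<partial>chain_space)
      = (\<integral>\<^sup>+s. (\<integral>\<^sup>+\<omega>'. Tr w \<mu> U \<phi> (Suc n) x t (case_nat s \<omega>') \<partial>chain_space) \<partial>M0)"
    by (rule split_integral) measurable
  also have "\<dots> \<le> (\<integral>\<^sup>+s. h s \<partial>M0)"
  proof (rule nn_integral_mono)
    fix s :: "real \<times> real"
    show "(\<integral>\<^sup>+\<omega>'. Tr w \<mu> U \<phi> (Suc n) x t (case_nat s \<omega>') \<partial>chain_space) \<le> h s"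
    proof (cases "t < snd s * c")
      case True
      then have "(\<integral>\<^sup>+\<omega>'. Tr w \<mu> U \<phi> (Suc n) x t (case_nat s \<omega>') \<partial>chain_space) = (\<integral>\<^sup>+\<omega>'. A \<partial>chain_space)"
        by (simp add: c_def A_def)
      also have "\<dots> = A" using prob_space.emeasure_space_1[OF prob_chain] by simp
      finally show ?thesis using True by (simp add: h_def)
    next
      case False
      let ?y = "jump_next w x (fst s)"
      have "(\<integral>\<^sup>+\<omega>'. Tr w \<mu> U \<phi> (Suc n) x t (case_nat s \<omega>') \<partial>chain_space)
          = (\<integral>\<^sup>+\<omega>'. ennreal (exp (- (U x * (snd s * c)))) * Tr w \<mu> U \<phi> n ?y (t - snd s * c) \<omega>' \<partial>chain_space)"
        using False by (simp add: c_def)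
      also have "\<dots> = ennreal (exp (- (U x * (snd s * c)))) * (\<integral>\<^sup>+\<omega>'. Tr w \<mu> U \<phi> n ?y (t - snd s * c) \<omega>' \<partial>chain_space)"
        by (rule nn_integral_cmult) measurable
      also have "\<dots> \<le> ennreal (exp (- (U x * (snd s * c)))) * ennreal (\<phi> ?y)"
        using False by (intro mult_left_mono Suc.IH) auto
      finally show ?thesis using False by (simp add: h_def)
    qed
  qed
  also have "(\<integral>\<^sup>+s. h s \<partial>M0) = (\<integral>\<^sup>+e. (\<integral>\<^sup>+u. h (u, e) \<partial>Unif) \<partial>Expd)"
    using hm unfolding M0_def by (rule UE.nn_integral_snd[symmetric])
  also have "\<dots> \<le> (\<integral>\<^sup>+e. (if t < e * c then ennreal (\<phi> x * exp (- (U x * t)))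
             else ennreal (exp (- (U x * (e * c)))) * ennreal P) \<partial>Expd)"
  proof (rule nn_integral_mono)
    fix e :: real
    show "(\<integral>\<^sup>+u. h (u, e) \<partial>Unif) \<le> (if t < e * c then ennreal (\<phi> x * exp (- (U x * t)))
             else ennreal (exp (- (U x * (e * c)))) * ennreal P)"
    proof (cases "t < e * c")
      case True
      then have "(\<integral>\<^sup>+u. h (u, e) \<partial>Unif) = (\<integral>\<^sup>+u. A \<partial>Unif)" by (simp add: h_def)
      also have "\<dots> = A" using prob_space.emeasure_space_1[OF prob_Unif] by simp
      finally show ?thesis using True by (simp add: A_def)
    next
      case False
      then have "(\<integral>\<^sup>+u. h (u, e) \<partial>Unif) = (\<integral>\<^sup>+u. ennreal (exp (- (U x * (e * c)))) * ennreal (\<phi> (jump_next w x u)) \<partial>Unif)"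
        by (simp add: h_def)
      also have "\<dots> = ennreal (exp (- (U x * (e * c)))) * (\<integral>\<^sup>+u. ennreal (\<phi> (jump_next w x u)) \<partial>Unif)"
        by (rule nn_integral_cmult) measurable
      also have "\<dots> \<le> ennreal (exp (- (U x * (e * c)))) * ennreal P"
        unfolding P_def by (intro mult_left_mono unif_bound[OF G phi]) auto
      finally show ?thesis using False by simp
    qed
  qed
  also have "\<dots> \<le> ennreal (\<phi> x)"
    by (rule exp_bound[OF c Suc.prems P0 phi hP])
  finally show ?case .
qed

lemma Tr_mono: "Tr w \<mu> U \<phi> n x t \<omega> \<le> Tr w \<mu> U \<phi> (Suc n) x t \<omega>"
proof (induction n arbitrary: x t \<omega>)
  case 0 then show ?case by simp
next
  case (Suc n)
  define C where "C = (t < snd (\<omega> 0) * (\<mu> x / wdeg w x))"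
  define A where "A = ennreal (\<phi> x * exp (- (U x * t)))"
  define B where "B = ennreal (exp (- (U x * (snd (\<omega> 0) * (\<mu> x / wdeg w x)))))"
  define y where "y = jump_next w x (fst (\<omega> 0))"
  define t' where "t' = t - snd (\<omega> 0) * (\<mu> x / wdeg w x)"
  define \<omega>' where "\<omega>' = (\<lambda>k. \<omega> (Suc k))"
  have e1: "Tr w \<mu> U \<phi> (Suc n) x t \<omega> = (if C then A else B * Tr w \<mu> U \<phi> n y t' \<omega>')"
    unfolding C_def A_def B_def y_def t'_def \<omega>'_def by (rule Tr.simps(2))
  have e2: "Tr w \<mu> U \<phi> (Suc (Suc n)) x t \<omega> = (if C then A else B * Tr w \<mu> U \<phi> (Suc n) y t' \<omega>')"
    unfolding C_def A_def B_def y_def t'_def \<omega>'_def by (rule Tr.simps(2))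
  show ?case unfolding e1 e2 using Suc.IH[of y t' \<omega>'] by (auto simp del: Tr.simps intro: mult_left_mono)
qed

lemma jc_shift: "jump_chain w x \<omega> (Suc k) = jump_chain w (jump_next w x (fst (\<omega> 0))) (\<lambda>k. \<omega> (Suc k)) k"
  by (induction k) auto

lemma ht_shift: "holding_time w \<mu> x \<omega> (Suc k) = holding_time w \<mu> (jump_next w x (fst (\<omega> 0))) (\<lambda>k. \<omega> (Suc k)) k"
  unfolding holding_time_def jc_shift by simp

lemma ht0: "holding_time w \<mu> x \<omega> 0 = snd (\<omega> 0) * (\<mu> x / wdeg w x)"
  by (simp add: holding_time_def)

lemma jt_shift: "jump_time w \<mu> x \<omega> (Suc k) = snd (\<omega> 0) * (\<mu> x / wdeg w x) + jump_time w \<mu> (jump_next w x (fst (\<omega> 0))) (\<lambda>k. \<omega> (Suc k)) k"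
  by (simp only: jump_time_def sum.lessThan_Suc_shift ht_shift ht0)

lemma jt0: "jump_time w \<mu> x \<omega> 0 = 0" by (simp add: jump_time_def)

lemma cs_before:
  assumes "0 \<le> s" "s < snd (\<omega> 0) * (\<mu> x / wdeg w x)"
  shows "chain_state w \<mu> x \<omega> s = Some x"
proof -
  have P0: "jump_time w \<mu> x \<omega> 0 \<le> s \<and> s < jump_time w \<mu> x \<omega> (Suc 0)"
    using assms by (simp add: jt0 jump_time_def ht0)
  then have "(LEAST n. jump_time w \<mu> x \<omega> n \<le> s \<and> s < jump_time w \<mu> x \<omega> (Suc n)) = 0"
    by (intro Least_eq_0) simp
  then show ?thesis using P0 unfolding chain_state_def by auto
qed

lemma cs_after:
  assumes "snd (\<omega> 0) * (\<mu> x / wdeg w x) \<le> s"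
  shows "chain_state w \<mu> x \<omega> s = chain_state w \<mu> (jump_next w x (fst (\<omega> 0))) (\<lambda>k. \<omega> (Suc k)) (s - snd (\<omega> 0) * (\<mu> x / wdeg w x))"
proof -
  define P where "P n \<longleftrightarrow> jump_time w \<mu> x \<omega> n \<le> s \<and> s < jump_time w \<mu> x \<omega> (Suc n)" for n
  define Q where "Q m \<longleftrightarrow> jump_time w \<mu> (jump_next w x (fst (\<omega> 0))) (\<lambda>k. \<omega> (Suc k)) m \<le> s - snd (\<omega> 0) * (\<mu> x / wdeg w x)
     \<and> s - snd (\<omega> 0) * (\<mu> x / wdeg w x) < jump_time w \<mu> (jump_next w x (fst (\<omega> 0))) (\<lambda>k. \<omega> (Suc k)) (Suc m)" for m
  have PQ: "P (Suc m) \<longleftrightarrow> Q m" for m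
    unfolding P_def Q_def jt_shift[of _ _ x \<omega>] by auto
  have nP0: "\<not> P 0" using assms by (simp add: P_def jt0 jump_time_def ht0)
  have ex: "(\<exists>n. P n) \<longleftrightarrow> (\<exists>m. Q m)"
    using PQ nP0 by (metis not0_implies_Suc)
  show ?thesis
  proof (cases "\<exists>m. Q m")
    case True
    then obtain m where "Q m" by blast
    then have "P (Suc m)" using PQ by simp
    then have L: "(LEAST n. P n) = Suc (LEAST m. P (Suc m))" using nP0 by (rule Least_Suc)
    have "chain_state w \<mu> x \<omega> s = Some (jump_chain w x \<omega> (LEAST n. P n))"
      using True ex unfolding chain_state_def P_def by auto
    also have "\<dots> = Some (jump_chain w (jump_next w x (fst (\<omega> 0))) (\<lambda>k. \<omega> (Suc k)) (LEAST m. Q m))"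
      unfolding L PQ jc_shift by simp
    also have "\<dots> = chain_state w \<mu> (jump_next w x (fst (\<omega> 0))) (\<lambda>k. \<omega> (Suc k)) (s - snd (\<omega> 0) * (\<mu> x / wdeg w x))"
      using True unfolding chain_state_def Q_def by auto
    finally show ?thesis .
  next
    case False
    then show ?thesis using ex unfolding chain_state_def P_def Q_def by auto
  qed
qed

lemma cs_meas[measurable]: "(\<lambda>s. chain_state w \<mu> x \<omega> s) \<in> borel \<rightarrow>\<^sub>M count_space UNIV"
  unfolding chain_state_def by measurable

lemma ext_meas[measurable]: "(\<lambda>s. ext_cem U (chain_state w \<mu> x \<omega> s)) \<in> borel_measurable borel"
  by (rule measurable_compose[OF cs_meas]) simp

lemma set_int:
  assumes C: "\<forall>v. \<bar>U v\<bar> \<le> C" and A: "A \<in> sets borel" "emeasure lborel A < \<infinity>"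
  shows "set_integrable lborel A (\<lambda>s. ext_cem U (chain_state w \<mu> x \<omega> s))"
  unfolding set_integrable_def
proof (rule integrableI_bounded_set_indicator[where B=C])
  show "AE s in lborel. s \<in> A \<longrightarrow> norm (ext_cem U (chain_state w \<mu> x \<omega> s)) \<le> C"
  proof (intro AE_I2 impI)
    fix s
    have "0 \<le> C" using C[rule_format, of x] by simp
    then show "norm (ext_cem U (chain_state w \<mu> x \<omega> s)) \<le> C"
      using C by (cases "chain_state w \<mu> x \<omega> s") (auto simp: ext_cem_def)
  qed
qed (use A in auto)

lemma LBINT_shift:
  fixes g :: "real \<Rightarrow> real"
  shows "(LBINT s:{a..b}. g (s - c)) = (LBINT s:{a-c..b-c}. g s)"
  unfolding set_lebesgue_integral_def
  by (subst lborel_integral_real_affine[where c=1 and t=c])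
     (auto intro!: Bochner_Integration.integral_cong split: split_indicator)

lemma L_before:
  assumes "0 \<le> t" "t < snd (\<omega> 0) * (\<mu> x / wdeg w x)"
  shows "(LBINT s:{0..t}. ext_cem U (chain_state w \<mu> x \<omega> s)) = U x * t"
proof -
  have "(LBINT s:{0..t}. ext_cem U (chain_state w \<mu> x \<omega> s)) = (LBINT s:{0..t}. U x)"
    using assms by (intro set_lebesgue_integral_cong) (auto simp: cs_before ext_cem_def)
  also have "\<dots> = U x * t" using assms by (subst set_integral_const) auto
  finally show ?thesis .
qed

lemma L_after:
  assumes C: "\<forall>v. \<bar>U v\<bar> \<le> C" and t0: "0 \<le> snd (\<omega> 0) * (\<mu> x / wdeg w x)" and tt: "snd (\<omega> 0) * (\<mu> x / wdeg w x) \<le> t"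
  shows "(LBINT s:{0..t}. ext_cem U (chain_state w \<mu> x \<omega> s)) =
     U x * (snd (\<omega> 0) * (\<mu> x / wdeg w x)) +
     (LBINT s:{0..t - snd (\<omega> 0) * (\<mu> x / wdeg w x)}. ext_cem U (chain_state w \<mu> (jump_next w x (fst (\<omega> 0))) (\<lambda>k. \<omega> (Suc k)) s))"
proof -
  define \<tau> where "\<tau> = snd (\<omega> 0) * (\<mu> x / wdeg w x)"
  let ?f = "\<lambda>s. ext_cem U (chain_state w \<mu> x \<omega> s)"
  let ?g = "\<lambda>s. ext_cem U (chain_state w \<mu> (jump_next w x (fst (\<omega> 0))) (\<lambda>k. \<omega> (Suc k)) s)"
  have un: "{0..t} = {0..<\<tau>} \<union> {\<tau>..t}" using t0 tt by (auto simp: \<tau>_def)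
  have "(LBINT s:{0..t}. ?f s) = (LBINT s:{0..<\<tau>}. ?f s) + (LBINT s:{\<tau>..t}. ?f s)"
    unfolding un using t0 tt by (intro set_integral_Un set_int[OF C]) (auto simp: \<tau>_def)
  also have "(LBINT s:{0..<\<tau>}. ?f s) = (LBINT s:{0..<\<tau>}. U x)"
    by (intro set_lebesgue_integral_cong) (auto simp: cs_before ext_cem_def \<tau>_def)
  also have "\<dots> = U x * \<tau>" using t0 by (subst set_integral_const) (auto simp: \<tau>_def)
  also have "(LBINT s:{\<tau>..t}. ?f s) = (LBINT s:{\<tau>..t}. ?g (s - \<tau>))"
    by (intro set_lebesgue_integral_cong) (auto simp: \<tau>_def cs_after)
  also have "\<dots> = (LBINT s:{\<tau>-\<tau>..t-\<tau>}. ?g s)" by (rule LBINT_shift)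
  finally show ?thesis by (simp add: \<tau>_def)
qed

definition Iv where
  "Iv w \<mu> U \<phi> x t \<omega> = ennreal (ext_cem \<phi> (chain_state w \<mu> x \<omega> t) *
              exp (- (LBINT s:{0..t}. ext_cem U (chain_state w \<mu> x \<omega> s))))"

lemma Iv_eq_Tr:
  assumes G: "simple_weighted_graph w \<mu>" and C: "\<forall>v. \<bar>U v\<bar> \<le> C" and phi: "\<And>y. 0 \<le> \<phi> y"
  shows "\<forall>\<omega> x t. (\<forall>k. 0 \<le> snd (\<omega> k)) \<longrightarrow> 0 \<le> t \<longrightarrow> t < jump_time w \<mu> x \<omega> n \<longrightarrow> Iv w \<mu> U \<phi> x t \<omega> = Tr w \<mu> U \<phi> n x t \<omega>"
proof (induction n)
  case 0
  then show ?case by (simp add: jt0)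
next
  case (Suc n)
  show ?case
  proof (intro allI impI)
    fix \<omega> x t
    assume nn: "\<forall>k. 0 \<le> snd (\<omega> k)" and t0: "0 \<le> t" and tJ: "t < jump_time w \<mu> x \<omega> (Suc n)"
    define \<tau> where "\<tau> = snd (\<omega> 0) * (\<mu> x / wdeg w x)"
    have \<tau>0: "0 \<le> \<tau>" using nn swg_facts[OF G, of x] by (simp add: \<tau>_def)
    show "Iv w \<mu> U \<phi> x t \<omega> = Tr w \<mu> U \<phi> (Suc n) x t \<omega>"
    proof (cases "t < \<tau>")
      case True
      have L: "(LBINT s:{0..t}. ext_cem U (chain_state w \<mu> x \<omega> s)) = U x * t"
        using True t0 unfolding \<tau>_def by (rule L_before[rotated])
      have cs: "chain_state w \<mu> x \<omega> t = Some x"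
        using True t0 unfolding \<tau>_def by (intro cs_before)
      have "Iv w \<mu> U \<phi> x t \<omega> = ennreal (\<phi> x * exp (- (U x * t)))"
        unfolding Iv_def L cs by (simp add: ext_cem_def)
      then show ?thesis using True by (simp add: \<tau>_def)
    next
      case False
      define y where "y = jump_next w x (fst (\<omega> 0))"
      define \<omega>' where "\<omega>' = (\<lambda>k. \<omega> (Suc k))"
      have cs: "chain_state w \<mu> x \<omega> t = chain_state w \<mu> y \<omega>' (t - \<tau>)"
        using False unfolding \<tau>_def y_def \<omega>'_def by (intro cs_after) simp
      define L' where "L' = (LBINT s:{0..t - \<tau>}. ext_cem U (chain_state w \<mu> y \<omega>' s))"
      have L: "(LBINT s:{0..t}. ext_cem U (chain_state w \<mu> x \<omega> s)) = U x * \<tau> + L'"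
        unfolding L'_def \<tau>_def y_def \<omega>'_def
        by (rule L_after[OF C]) (use \<tau>0 False in \<open>simp_all add: \<tau>_def\<close>)
      define a where "a = ext_cem \<phi> (chain_state w \<mu> y \<omega>' (t - \<tau>))"
      have a0: "0 \<le> a" unfolding a_def using phi
        by (cases "chain_state w \<mu> y \<omega>' (t - \<tau>)") (auto simp: ext_cem_def)
      have ee: "exp (- (U x * \<tau> + L')) = exp (- (U x * \<tau>)) * exp (- L')"
        by (simp add: exp_add[symmetric])
      have "Iv w \<mu> U \<phi> x t \<omega> = ennreal (a * exp (- (U x * \<tau> + L')))"
        unfolding Iv_def L cs a_def ..
      also have "\<dots> = ennreal (exp (- (U x * \<tau>)) * (a * exp (- L')))"
        unfolding ee by (simp only: mult_ac)
      also have "\<dots> = ennreal (exp (- (U x * \<tau>))) * ennreal (a * exp (- L'))"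
        using a0 by (intro ennreal_mult) auto
      also have "ennreal (a * exp (- L')) = Iv w \<mu> U \<phi> y (t - \<tau>) \<omega>'"
        unfolding Iv_def a_def L'_def ..
      also have "Iv w \<mu> U \<phi> y (t - \<tau>) \<omega>' = Tr w \<mu> U \<phi> n y (t - \<tau>) \<omega>'"
      proof (rule Suc.IH[rule_format])
        show "0 \<le> snd (\<omega>' k)" for k using nn by (simp add: \<omega>'_def)
        show "0 \<le> t - \<tau>" using False by simp
        show "t - \<tau> < jump_time w \<mu> y \<omega>' n"
          using tJ unfolding jt_shift[of _ _ x \<omega>] \<tau>_def y_def \<omega>'_def by simp
      qed
      also have "ennreal (exp (- (U x * \<tau>))) * Tr w \<mu> U \<phi> n y (t - \<tau>) \<omega>' = Tr w \<mu> U \<phi> (Suc n) x t \<omega>"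
        using False unfolding \<tau>_def y_def \<omega>'_def by (simp only: Tr.simps if_False)
      finally show ?thesis .
    qed
  qed
qed

lemma Iv_le_SUP:
  assumes G: "simple_weighted_graph w \<mu>" and C: "\<forall>v. \<bar>U v\<bar> \<le> C" and phi: "\<And>y. 0 \<le> \<phi> y"
    and nn: "\<forall>k. 0 \<le> snd (\<omega> k)" and t0: "0 \<le> t"
  shows "Iv w \<mu> U \<phi> x t \<omega> \<le> (SUP n. Tr w \<mu> U \<phi> n x t \<omega>)"
proof (cases "\<exists>n. jump_time w \<mu> x \<omega> n \<le> t \<and> t < jump_time w \<mu> x \<omega> (Suc n)")
  case True
  then obtain n where tJ: "t < jump_time w \<mu> x \<omega> (Suc n)" by blast
  have all: "\<forall>\<omega> x t. (\<forall>k. 0 \<le> snd (\<omega> k)) \<longrightarrow> 0 \<le> t \<longrightarrow> t < jump_time w \<mu> x \<omega> (Suc n) \<longrightarrow> Iv w \<mu> U \<phi> x t \<omega> = Tr w \<mu> U \<phi> (Suc n) x t \<omega>"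
    by (rule Iv_eq_Tr[OF G C phi])
  have "Iv w \<mu> U \<phi> x t \<omega> = Tr w \<mu> U \<phi> (Suc n) x t \<omega>"
    using spec[OF spec[OF spec[OF all, of \<omega>], of x], of t] nn t0 tJ by blast
  also have "\<dots> \<le> (SUP n. Tr w \<mu> U \<phi> n x t \<omega>)" by (rule SUP_upper) simp
  finally show ?thesis .
next
  case False
  then have "chain_state w \<mu> x \<omega> t = None" unfolding chain_state_def by simp
  then have "Iv w \<mu> U \<phi> x t \<omega> = 0" unfolding Iv_def by (simp add: ext_cem_def)
  then show ?thesis by simp
qed

lemma AE_nn: "AE \<omega> in chain_space. \<forall>k. 0 \<le> snd (\<omega> k)"
proof -
  have ae0: "AE p in M0. 0 \<le> snd p"
    unfolding M0_def
  proof (rule UE.AE_pair_measure)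
    have "{x \<in> space (Unif \<Otimes>\<^sub>M Expd). 0 \<le> snd x} = space Unif \<times> {0..}"
      by (auto simp: space_pair_measure)
    also have "\<dots> \<in> sets (Unif \<Otimes>\<^sub>M Expd)" by (intro pair_measureI) auto
    finally show "{x \<in> space (Unif \<Otimes>\<^sub>M Expd). 0 \<le> snd x} \<in> sets (Unif \<Otimes>\<^sub>M Expd)" .
    have m: "(\<lambda>x. ennreal (exponential_density (1::real) x)) \<in> borel_measurable lborel" by simp
    have "AE x in lborel. 0 < ennreal (exponential_density (1::real) x) \<longrightarrow> 0 \<le> x"
      by (intro AE_I2) (auto simp: exponential_density_def split: if_splits)
    then have "AE y in Expd. 0 \<le> y" using AE_density[OF m] by blast
    then show "AE x in Unif. AE y in Expd. 0 \<le> snd (x, y)" by simp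
  qed
  have "AE \<omega> in SQ.S. 0 \<le> snd (\<omega> k)" for k
    using SQ.AE_component[OF UNIV_I ae0] by simp
  then have "\<forall>k. AE \<omega> in chain_space. 0 \<le> snd (\<omega> k)" unfolding S_eq by blast
  then show ?thesis unfolding AE_all_countable .
qed

theorem proposition2p5:
  fixes w :: "'v::countable \<Rightarrow> 'v \<Rightarrow> real" and \<mu> :: "'v \<Rightarrow> real"
    and U \<phi> :: "'v \<Rightarrow> real"
  assumes "simple_weighted_graph w \<mu>"
    and "\<exists>C. \<forall>x. \<bar>U x\<bar> \<le> C"
    and "\<exists>C. \<forall>x. \<phi> x \<le> C"
    and "\<forall>x. 0 \<le> \<phi> x"
    and "\<forall>x. graph_laplacian w \<mu> \<phi> x + U x * \<phi> x \<ge> 0"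
  shows "\<forall>t\<ge>0. \<forall>x. fk_semigroup w \<mu> U t \<phi> x \<le> ennreal (\<phi> x)"
proof (intro allI impI)
  fix t :: real and x :: 'v
  assume t0: "0 \<le> t"
  note G = assms(1)
  obtain C where C: "\<forall>v. \<bar>U v\<bar> \<le> C" using assms(2) by blast
  have phi: "\<And>y. 0 \<le> \<phi> y" using assms(4) by simp
  have H: "\<And>x. 0 \<le> graph_laplacian w \<mu> \<phi> x + U x * \<phi> x" using assms(5) by simp
  have "fk_semigroup w \<mu> U t \<phi> x = (\<integral>\<^sup>+\<omega>. Iv w \<mu> U \<phi> x t \<omega> \<partial>chain_space)"
    unfolding fk_semigroup_def Iv_def by (rule refl)
  also have "\<dots> \<le> (\<integral>\<^sup>+\<omega>. (SUP n. Tr w \<mu> U \<phi> n x t \<omega>) \<partial>chain_space)"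
  proof (rule nn_integral_mono_AE)
    have pt: "Iv w \<mu> U \<phi> x t \<omega> \<le> (SUP n. Tr w \<mu> U \<phi> n x t \<omega>)" if "\<forall>k. 0 \<le> snd (\<omega> k)" for \<omega>
      using Iv_le_SUP[OF G C phi that t0] .
    show "AE \<omega> in chain_space. Iv w \<mu> U \<phi> x t \<omega> \<le> (SUP n. Tr w \<mu> U \<phi> n x t \<omega>)"
      using AE_nn pt by (rule eventually_mono)
  qed
  also have "\<dots> = (SUP n. (\<integral>\<^sup>+\<omega>. Tr w \<mu> U \<phi> n x t \<omega> \<partial>chain_space))"
  proof (rule nn_integral_monotone_convergence_SUP)
    show "incseq (\<lambda>n \<omega>. Tr w \<mu> U \<phi> n x t \<omega>)"
      by (intro incseq_SucI le_funI Tr_mono)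
    show "(\<lambda>\<omega>. Tr w \<mu> U \<phi> n x t \<omega>) \<in> borel_measurable chain_space" for n
      by (rule Tr_meas_t)
  qed
  also have "\<dots> \<le> ennreal (\<phi> x)"
    by (intro SUP_least Tr_bound[OF G phi H t0])
  finally show "fk_semigroup w \<mu> U t \<phi> x \<le> ennreal (\<phi> x)" .
qed


end
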